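(* Let $(D_n)_{n\in\mathbb N}$, $D_n=(\mathcal V_n,\mathcal E_n)$, be finite connected graphs with distinct vertices $a_n,b_n\in\mathcal V_n$, and let $\Gamma_D$ be the associated tree-like graph. For $p\in[0,1]$: (a) if $\limsup_{n\to\infty}h^{D_n}(p)<1/2$, then $p\le p_c^{\Gamma_D}$; (b) if $\liminf_{n\to\infty}h^{D_n}(p)>1/2$, then $p\ge p_c^{\Gamma_D}$.
   Context: Let $\mathbb T_3=(V_3,E_3)$ be the infinite $3$-regular tree with a fixed root $\rho$. For an edge $e\in E_3$, let $f(e)$ be its endpoint closer to $\rho$ and $s(e)$ the other endpoint. The graph $\Gamma_D$ is obtained from $\mathbb T_3$ by replacing each edge $e$ with $\mathrm{dist}(s(e),\rho)=n$ by a copy $D_e$ of $D_n$, identifying $a_n$ with $f(e)$ and $b_n$ with $s(e)$ (copies for different edges are otherwise disjoint). Graphs may have multiple edges. For a finite graph $D_n$, $h^{D_n}(p)$ is the probability, under Bernoulli bond percolation on $D_n$ with parameter $p$ (each edge independently open with probability $p$), that $a_n$ and $b_n$ are connected by a path of open edges. For a graph $G$, $p_c^G$ is the critical point of Bernoulli bond percolation: the probability of an infinite open cluster is $0$ for $p<p_c^G$ and positive for $p>p_c^G$. *)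

theory Defs
  imports "HOL-Probability.Probability"
begin

text \<open>A multigraph is given by a vertex set, an edge set and an endpoint map
  ends :: edge => vertex * vertex (so multiple edges are allowed).
  conn ends S x y: x and y are joined by a path using only edges from S.\<close>

definition conn :: "('e \<Rightarrow> 'v \<times> 'v) \<Rightarrow> 'e set \<Rightarrow> 'v \<Rightarrow> 'v \<Rightarrow> bool" where
  "conn ends S = (\<lambda>x y. \<exists>e\<in>S. ends e = (x, y) \<or> ends e = (y, x))\<^sup>*\<^sup>*"

definition h_conn :: "'e set \<Rightarrow> ('e \<Rightarrow> 'v \<times> 'v) \<Rightarrow> 'v \<Rightarrow> 'v \<Rightarrow> real \<Rightarrow> real" where
  "h_conn E ends a b p =
     measure_pmf.prob (Pi_pmf E False (\<lambda>_. bernoulli_pmf p))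
       {\<omega>. conn ends {e\<in>E. \<omega> e} a b}"

definition perc_measure :: "'e set \<Rightarrow> real \<Rightarrow> ('e \<Rightarrow> bool) measure" where
  "perc_measure E p = PiM E (\<lambda>_. measure_pmf (bernoulli_pmf p))"

definition theta_inf :: "'v set \<Rightarrow> 'e set \<Rightarrow> ('e \<Rightarrow> 'v \<times> 'v) \<Rightarrow> real \<Rightarrow> real" where
  "theta_inf V E ends p =
     measure (perc_measure E p)
       {\<omega> \<in> space (perc_measure E p).
          \<exists>x\<in>V. infinite {y. conn ends {e\<in>E. \<omega> e} x y}}"

definition p_crit :: "'v set \<Rightarrow> 'e set \<Rightarrow> ('e \<Rightarrow> 'v \<times> 'v) \<Rightarrow> real" where
  "p_crit V E ends = Sup {p \<in> {0..1}. theta_inf V E ends p = 0}"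

text \<open>Vertices of T_3 are words: the root is [], the root has children [0],[1],[2],
  every other vertex v has children v@[0], v@[1]; the parent of v is butlast v and
  dist(v, root) = length v. Each non-root vertex v indexes the edge e with s(e) = v.\<close>

definition T3 :: "nat list set" where
  "T3 = {v. case v of [] \<Rightarrow> True | x # xs \<Rightarrow> x < 3 \<and> (\<forall>i\<in>set xs. i < 2)}"

definition gmap :: "(nat \<Rightarrow> 'v) \<Rightarrow> (nat \<Rightarrow> 'v) \<Rightarrow> nat list \<Rightarrow> 'v \<Rightarrow> nat list + (nat list \<times> 'v)" where
  "gmap a b v x =
     (if x = a (length v) then Inl (butlast v)
      else if x = b (length v) then Inl v
      else Inr (v, x))"

definition Gamma_V :: "(nat \<Rightarrow> 'v set) \<Rightarrow> (nat \<Rightarrow> 'v) \<Rightarrow> (nat \<Rightarrow> 'v) \<Rightarrow> (nat list + (nat list \<times> 'v)) set" where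
  "Gamma_V V a b = Inl ` T3 \<union>
     {Inr (v, x) | v x. v \<in> T3 \<and> v \<noteq> [] \<and> x \<in> V (length v) - {a (length v), b (length v)}}"

definition Gamma_E :: "(nat \<Rightarrow> 'e set) \<Rightarrow> (nat list \<times> 'e) set" where
  "Gamma_E E = {(v, e). v \<in> T3 \<and> v \<noteq> [] \<and> e \<in> E (length v)}"

definition Gamma_ends :: "(nat \<Rightarrow> 'e \<Rightarrow> 'v \<times> 'v) \<Rightarrow> (nat \<Rightarrow> 'v) \<Rightarrow> (nat \<Rightarrow> 'v) \<Rightarrow>
    nat list \<times> 'e \<Rightarrow> (nat list + (nat list \<times> 'v)) \<times> (nat list + (nat list \<times> 'v))" where
  "Gamma_ends ends a b ve =
     (case ve of (v, e) \<Rightarrow>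
       (gmap a b v (fst (ends (length v) e)), gmap a b v (snd (ends (length v) e))))"

end

theory Submission
  imports Defs
begin


lemma perc_space: "space (perc_measure J q) = PiE J (\<lambda>_. UNIV)"
  by (simp add: perc_measure_def space_PiM)

lemma perc_prob_space: "prob_space (perc_measure I q)"
  unfolding perc_measure_def by (intro prob_space_PiM measure_pmf.prob_space_axioms)

lemma perc_sets_all:
  assumes "finite J" "X \<subseteq> space (perc_measure J q)"
  shows "X \<in> sets (perc_measure J q)"
proof -
  have finX: "finite X"
    using assms by (intro finite_subset[OF assms(2)]) (simp add: perc_space finite_PiE)
  have "X = (\<Union>f\<in>X. PiE J (\<lambda>i. {f i}))"
  proof (intro equalityI subsetI)
    fix x assume "x \<in> X" thus "x \<in> (\<Union>f\<in>X. PiE J (\<lambda>i. {f i}))"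
      using assms(2) by (auto simp: perc_space PiE_iff)
  next
    fix x assume "x \<in> (\<Union>f\<in>X. PiE J (\<lambda>i. {f i}))"
    then obtain f where f: "f \<in> X" "x \<in> PiE J (\<lambda>i. {f i})" by blast
    have "f \<in> PiE J (\<lambda>_. UNIV)" using f(1) assms(2) by (auto simp: perc_space)
    hence "x = f" using f(2) by (auto simp: PiE_iff extensional_def fun_eq_iff)
    thus "x \<in> X" using f(1) by simp
  qed
  also have "\<dots> \<in> sets (perc_measure J q)"
    using finX assms(1) unfolding perc_measure_def
    by (intro sets.finite_UN sets_PiM_I_finite) auto
  finally show ?thesis .
qed

lemma perc_distr_pmf:
  assumes fin: "finite J"
  shows "distr (measure_pmf (Pi_pmf J False (\<lambda>_. bernoulli_pmf q))) (perc_measure J q) (\<lambda>\<sigma>. restrict \<sigma> J)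
         = perc_measure J q"
  unfolding perc_measure_def
proof (rule product_sigma_finite.PiM_eqI, goal_cases)
  case 1
  interpret product_prob_space "\<lambda>_. measure_pmf (bernoulli_pmf q)" J
    by (intro product_prob_spaceI measure_pmf.prob_space_axioms)
  show ?case by unfold_locales
next
  case 2 show ?case by (rule fin)
next
  case 3 show ?case by simp
next
  case (4 A)
  have "Pi\<^sub>E J A \<in> sets (Pi\<^sub>M J (\<lambda>i. measure_pmf (bernoulli_pmf q)))"
    using 4 fin by (intro sets_PiM_I_finite) auto
  hence "emeasure (distr (measure_pmf (Pi_pmf J False (\<lambda>_. bernoulli_pmf q))) (Pi\<^sub>M J (\<lambda>i. measure_pmf (bernoulli_pmf q)))
          (\<lambda>x. restrict x J)) (Pi\<^sub>E J A) =
         emeasure (measure_pmf (Pi_pmf J False (\<lambda>_. bernoulli_pmf q))) ((\<lambda>x. restrict x J) -` Pi\<^sub>E J A)"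
    by (subst emeasure_distr) (auto simp: space_PiM)
  also have "\<dots> = emeasure (measure_pmf (Pi_pmf J False (\<lambda>_. bernoulli_pmf q))) (PiE_dflt J False A)"
    by (intro emeasure_eq_AE AE_pmfI) (auto simp: PiE_dflt_def set_Pi_pmf fin)
  also have "\<dots> = (\<Prod>i\<in>J. emeasure (measure_pmf (bernoulli_pmf q)) (A i))"
    by (simp add: measure_pmf.emeasure_eq_measure measure_Pi_pmf_PiE_dflt fin prod_ennreal)
  finally show ?case .
qed

lemma perc_bridge:
  assumes fin: "finite J" and JI: "J \<subseteq> I"
  shows "measure (perc_measure I q) {\<omega>\<in>space (perc_measure I q). P (restrict \<omega> J)}
       = measure_pmf.prob (Pi_pmf J False (\<lambda>_. bernoulli_pmf q)) {\<sigma>. P (restrict \<sigma> J)}"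
proof -
  interpret product_prob_space "\<lambda>_. measure_pmf (bernoulli_pmf q)" I
    by (intro product_prob_spaceI measure_pmf.prob_space_axioms)
  define X where "X = {f\<in>space (perc_measure J q). P f}"
  have Xs: "X \<in> sets (perc_measure J q)"
    unfolding X_def using fin by (intro perc_sets_all) auto
  have eq1: "{\<omega>\<in>space (perc_measure I q). P (restrict \<omega> J)} = prod_emb I (\<lambda>_. measure_pmf (bernoulli_pmf q)) J X"
    using JI by (auto simp: prod_emb_def X_def perc_space perc_measure_def space_PiM)
  have "emeasure (perc_measure I q) {\<omega>\<in>space (perc_measure I q). P (restrict \<omega> J)} = emeasure (perc_measure J q) X"
    unfolding eq1 using Xs fin JI unfolding perc_measure_def by (intro emeasure_PiM_emb') auto
  also have "\<dots> = emeasure (distr (measure_pmf (Pi_pmf J False (\<lambda>_. bernoulli_pmf q))) (perc_measure J q) (\<lambda>\<sigma>. restrict \<sigma> J)) X"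
    by (simp add: perc_distr_pmf fin)
  also have "\<dots> = emeasure (measure_pmf (Pi_pmf J False (\<lambda>_. bernoulli_pmf q))) ((\<lambda>\<sigma>. restrict \<sigma> J) -` X)"
    using Xs by (subst emeasure_distr) (auto simp: perc_measure_def measurable_def space_PiM)
  also have "(\<lambda>\<sigma>. restrict \<sigma> J) -` X = {\<sigma>. P (restrict \<sigma> J)}"
    by (auto simp: X_def perc_space)
  finally show ?thesis
    unfolding measure_def by (rule arg_cong)
qed



lemma pair_prob_times:
  "measure_pmf.prob (pair_pmf M N) (A \<times> B) = measure_pmf.prob M A * measure_pmf.prob N B"
proof -
  have "measure_pmf.prob (pair_pmf M N) (A \<times> B) = measure_pmf.prob (pair_pmf M N) ((A \<times> B) \<inter> set_pmf (pair_pmf M N))"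
    by (metis measure_Int_set_pmf)
  also have "(A \<times> B) \<inter> set_pmf (pair_pmf M N) = (A \<inter> set_pmf M) \<times> (B \<inter> set_pmf N)"
    by (auto simp: set_pair_pmf)
  also have "measure_pmf.prob (pair_pmf M N) \<dots> = measure_pmf.prob M (A \<inter> set_pmf M) * measure_pmf.prob N (B \<inter> set_pmf N)"
    by (intro measure_pmf_prob_product) auto
  finally show ?thesis by (simp add: measure_Int_set_pmf)
qed

lemma perc_indep:
  assumes fin: "finite J1" "finite J2" and sub: "J1 \<subseteq> I" "J2 \<subseteq> I" and disj: "J1 \<inter> J2 = {}"
  shows "measure (perc_measure I q) {\<omega>\<in>space (perc_measure I q). P1 (restrict \<omega> J1) \<and> P2 (restrict \<omega> J2)}
    = measure (perc_measure I q) {\<omega>\<in>space (perc_measure I q). P1 (restrict \<omega> J1)}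
      * measure (perc_measure I q) {\<omega>\<in>space (perc_measure I q). P2 (restrict \<omega> J2)}"
proof -
  let ?B = "\<lambda>_. bernoulli_pmf q"
  define P where "P = (\<lambda>f. P1 (restrict f J1) \<and> P2 (restrict f J2))"
  have "{\<omega>\<in>space (perc_measure I q). P1 (restrict \<omega> J1) \<and> P2 (restrict \<omega> J2)}
      = {\<omega>\<in>space (perc_measure I q). P (restrict \<omega> (J1 \<union> J2))}"
    by (auto simp: P_def restrict_restrict Int_absorb1)
  hence "measure (perc_measure I q) {\<omega>\<in>space (perc_measure I q). P1 (restrict \<omega> J1) \<and> P2 (restrict \<omega> J2)}
       = measure_pmf.prob (Pi_pmf (J1 \<union> J2) False ?B) {\<sigma>. P (restrict \<sigma> (J1 \<union> J2))}"
    using fin sub by (simp add: perc_bridge)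
  also have "\<dots> = measure_pmf.prob (map_pmf (\<lambda>(f,g) x. if x \<in> J1 then f x else g x)
             (pair_pmf (Pi_pmf J1 False ?B) (Pi_pmf J2 False ?B))) {\<sigma>. P (restrict \<sigma> (J1 \<union> J2))}"
    by (subst Pi_pmf_union) (use fin disj in auto)
  also have "\<dots> = measure_pmf.prob (pair_pmf (Pi_pmf J1 False ?B) (Pi_pmf J2 False ?B))
       ({f. P1 (restrict f J1)} \<times> {g. P2 (restrict g J2)})"
  proof -
    define mrg where "mrg = (\<lambda>(f,g) x. if x \<in> J1 then f x else (g x::bool))"
    have r1: "restrict (restrict (mrg (f,g)) (J1 \<union> J2)) J1 = restrict f J1" for f g
      by (auto simp: mrg_def restrict_def fun_eq_iff)
    have r2: "restrict (restrict (mrg (f,g)) (J1 \<union> J2)) J2 = restrict g J2" for f g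
      using disj by (auto simp: mrg_def restrict_def fun_eq_iff)
    have "mrg -` {\<sigma>. P (restrict \<sigma> (J1 \<union> J2))}
        = {f. P1 (restrict f J1)} \<times> {g. P2 (restrict g J2)}"
      by (auto simp: P_def r1 r2 simp del: restrict_restrict)
    thus ?thesis unfolding mrg_def by (simp add: measure_map_pmf)
  qed
  also have "\<dots> = measure_pmf.prob (Pi_pmf J1 False ?B) {f. P1 (restrict f J1)} *
                  measure_pmf.prob (Pi_pmf J2 False ?B) {g. P2 (restrict g J2)}"
    by (rule pair_prob_times)
  also have "\<dots> = measure (perc_measure I q) {\<omega>\<in>space (perc_measure I q). P1 (restrict \<omega> J1)}
      * measure (perc_measure I q) {\<omega>\<in>space (perc_measure I q). P2 (restrict \<omega> J2)}"
    using fin sub by (simp add: perc_bridge)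
  finally show ?thesis .
qed

definition upset :: "('i \<Rightarrow> bool) set \<Rightarrow> bool" where
  "upset U \<longleftrightarrow> (\<forall>f g. f \<in> U \<longrightarrow> (\<forall>x. f x \<longrightarrow> g x) \<longrightarrow> g \<in> U)"

lemma upset_mono_prob:
  assumes "finite A" "0 \<le> q" "q \<le> q'" "q' \<le> 1"
  shows "upset U \<Longrightarrow> measure_pmf.prob (Pi_pmf A False (\<lambda>_. bernoulli_pmf q)) U
                 \<le> measure_pmf.prob (Pi_pmf A False (\<lambda>_. bernoulli_pmf q')) U"
  using assms(1)
proof (induction A arbitrary: U rule: finite_induct)
  case empty
  thus ?case by simp
next
  case (insert x A)
  have key: "measure_pmf.prob (Pi_pmf (insert x A) False (\<lambda>_. bernoulli_pmf r)) U
     = r * measure_pmf.prob (Pi_pmf A False (\<lambda>_. bernoulli_pmf r)) {f. f(x:=True) \<in> U}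
       + (1 - r) * measure_pmf.prob (Pi_pmf A False (\<lambda>_. bernoulli_pmf r)) {f. f(x:=False) \<in> U}"
    if r: "0 \<le> r" "r \<le> 1" for r
  proof -
    let ?P = "Pi_pmf A False (\<lambda>_. bernoulli_pmf r)"
    have "measure_pmf.prob (Pi_pmf (insert x A) False (\<lambda>_. bernoulli_pmf r)) U
        = measure_pmf.prob (pair_pmf (bernoulli_pmf r) ?P) ((\<lambda>(y,f). f(x:=y)) -` U)"
      using insert by (subst Pi_pmf_insert) (auto simp: measure_map_pmf)
    also have "(\<lambda>(y,f). f(x:=y)) -` U = ({True} \<times> {f. f(x:=True) \<in> U}) \<union> ({False} \<times> {f. f(x:=False) \<in> U})"
    proof (rule set_eqI)
      fix z :: "bool \<times> ('a \<Rightarrow> bool)" obtain y f where z: "z = (y,f)" by (cases z)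
      show "z \<in> (\<lambda>(y,f). f(x:=y)) -` U \<longleftrightarrow> z \<in> ({True} \<times> {f. f(x:=True) \<in> U}) \<union> ({False} \<times> {f. f(x:=False) \<in> U})"
        unfolding z by (cases y) auto
    qed
    also have "measure_pmf.prob (pair_pmf (bernoulli_pmf r) ?P) \<dots>
       = measure_pmf.prob (pair_pmf (bernoulli_pmf r) ?P) ({True} \<times> {f. f(x:=True) \<in> U})
       + measure_pmf.prob (pair_pmf (bernoulli_pmf r) ?P) ({False} \<times> {f. f(x:=False) \<in> U})"
      by (intro measure_pmf.finite_measure_Union) auto
    also have "\<dots> = r * measure_pmf.prob ?P {f. f(x:=True) \<in> U} + (1 - r) * measure_pmf.prob ?P {f. f(x:=False) \<in> U}"
      using r by (simp add: pair_prob_times measure_pmf_single)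
    finally show ?thesis by (simp add: algebra_simps)
  qed
  have up1: "upset {f. f(x:=y) \<in> U}" for y
    using insert.prems unfolding upset_def by (metis (mono_tags, lifting) fun_upd_apply mem_Collect_eq)
  have sub: "{f. f(x:=False) \<in> U} \<subseteq> {f. f(x:=True) \<in> U}"
  proof
    fix f assume "f \<in> {f. f(x:=False) \<in> U}"
    moreover have "\<forall>z. (f(x:=False)) z \<longrightarrow> (f(x:=True)) z" by simp
    ultimately show "f \<in> {f. f(x:=True) \<in> U}" using insert.prems unfolding upset_def by blast
  qed
  define a1 where "a1 = measure_pmf.prob (Pi_pmf A False (\<lambda>_. bernoulli_pmf q)) {f. f(x:=True) \<in> U}"
  define a0 where "a0 = measure_pmf.prob (Pi_pmf A False (\<lambda>_. bernoulli_pmf q)) {f. f(x:=False) \<in> U}"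
  define b1 where "b1 = measure_pmf.prob (Pi_pmf A False (\<lambda>_. bernoulli_pmf q')) {f. f(x:=True) \<in> U}"
  define b0 where "b0 = measure_pmf.prob (Pi_pmf A False (\<lambda>_. bernoulli_pmf q')) {f. f(x:=False) \<in> U}"
  have "a1 \<le> b1" "a0 \<le> b0" unfolding a1_def b1_def a0_def b0_def by (intro insert.IH up1)+
  moreover have "b0 \<le> b1" unfolding b0_def b1_def by (intro measure_pmf.finite_measure_mono sub) auto
  ultimately have "q * a1 \<le> q * b1" "(1 - q) * a0 \<le> (1 - q) * b0" "q * (b1 - b0) \<le> q' * (b1 - b0)"
    using assms by (auto intro!: mult_left_mono mult_right_mono)
  hence "q * a1 + (1 - q) * a0 \<le> q' * b1 + (1 - q') * b0"
    by (simp add: algebra_simps)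
  thus ?case using key[of q] key[of q'] assms unfolding a1_def a0_def b1_def b0_def by simp
qed



lemma T3_Cons: "x # xs \<in> T3 \<longleftrightarrow> x < 3 \<and> (\<forall>i\<in>set xs. i < 2)"
  by (simp add: T3_def)

lemma T3_Nil[simp]: "[] \<in> T3" by (simp add: T3_def)

lemma T3_take: "v \<in> T3 \<Longrightarrow> take k v \<in> T3"
  by (cases v; cases k) (auto simp: T3_Cons dest: in_set_takeD)

lemma T3_butlast: "v \<in> T3 \<Longrightarrow> butlast v \<in> T3"
  by (simp add: butlast_conv_take T3_take)

lemma T3_set: "v \<in> T3 \<Longrightarrow> set v \<subseteq> {..<3}"
  by (cases v) (auto simp: T3_Cons)

lemma T3_finite_len: "finite {v\<in>T3. length v \<le> L}"
proof -
  have "{v\<in>T3. length v \<le> L} \<subseteq> {v. set v \<subseteq> {..<3} \<and> length v \<le> L}" using T3_set by auto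
  thus ?thesis by (rule finite_subset) (intro finite_lists_length_le, simp)
qed

lemma T3_app_nonnil: "r \<in> T3 \<Longrightarrow> r \<noteq> [] \<Longrightarrow> r @ s \<in> T3 \<longleftrightarrow> set s \<subseteq> {..<2}"
  by (cases r) (auto simp: T3_Cons)

lemma card_ext:
  assumes "r \<in> T3"
  shows "finite {s. length s = m \<and> r @ s \<in> T3} \<and> card {s. length s = m \<and> r @ s \<in> T3} \<le> 3 * 2 ^ m"
proof (cases "r = []")
  case False
  have eq: "{s. length s = m \<and> r @ s \<in> T3} = {s. set s \<subseteq> {..<2} \<and> length s = m}"
    using T3_app_nonnil[OF assms False] by auto
  show ?thesis unfolding eq by (simp add: card_lists_length_eq finite_lists_length_eq)
next
  case True
  show ?thesis
  proof (cases m)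
    case 0
    have "{s. length s = m \<and> r @ s \<in> T3} = {[]}" using True 0 by auto
    thus ?thesis by simp
  next
    case (Suc m')
    have sub: "{s. length s = m \<and> r @ s \<in> T3} \<subseteq> (\<lambda>(x,xs). x # xs) ` ({..<3::nat} \<times> {s. set s \<subseteq> {..<2} \<and> length s = m'})"
    proof
      fix s assume "s \<in> {s. length s = m \<and> r @ s \<in> T3}"
      hence s: "length s = Suc m'" "s \<in> T3" using True Suc by auto
      then obtain x xs where sx: "s = x # xs" by (cases s) auto
      have "length xs = m'" "x < 3" "set xs \<subseteq> {..<2}" using s unfolding sx T3_Cons by auto
      thus "s \<in> (\<lambda>(x,xs). x # xs) ` ({..<3::nat} \<times> {s. set s \<subseteq> {..<2} \<and> length s = m'})"
        unfolding sx by (intro image_eqI[where x="(x,xs)"]) auto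
    qed
    have fin: "finite ({..<3::nat} \<times> {s. set s \<subseteq> {..<2::nat} \<and> length s = m'})"
      by (simp add: finite_lists_length_eq)
    have "card {s. length s = m \<and> r @ s \<in> T3} \<le> card ((\<lambda>(x,xs). x # xs) ` ({..<3::nat} \<times> {s. set s \<subseteq> {..<2} \<and> length s = m'}))"
      by (rule card_mono[OF finite_imageI[OF fin] sub])
    also have "\<dots> \<le> card ({..<3::nat} \<times> {s. set s \<subseteq> {..<2::nat} \<and> length s = m'})"
      by (rule card_image_le[OF fin])
    also have "\<dots> = 3 * 2 ^ m'" by (simp add: card_cartesian_product card_lists_length_eq)
    also have "\<dots> \<le> 3 * 2 ^ m" using Suc by simp
    finally show ?thesis using finite_subset[OF sub finite_imageI[OF fin]] by simp
  qed
qed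

lemma conn_refl[simp]: "conn ends S x x" by (simp add: conn_def)

lemma conn_trans: "conn ends S x y \<Longrightarrow> conn ends S y z \<Longrightarrow> conn ends S x z"
  unfolding conn_def by (rule rtranclp_trans)

lemma conn_sym: "conn ends S x y \<Longrightarrow> conn ends S y x"
proof -
  have "symp (\<lambda>x y. \<exists>e\<in>S. ends e = (x, y) \<or> ends e = (y, x))" by (auto simp: symp_def)
  hence "symp (\<lambda>x y. \<exists>e\<in>S. ends e = (x, y) \<or> ends e = (y, x))\<^sup>*\<^sup>*" by (rule symp_rtranclp)
  thus "conn ends S x y \<Longrightarrow> conn ends S y x" unfolding conn_def by (rule sympD)
qed

lemma conn_edge: "e \<in> S \<Longrightarrow> ends e = (x, y) \<Longrightarrow> conn ends S x y"
  unfolding conn_def by (rule r_into_rtranclp) blast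

lemma conn_empty: "conn ends {} x y \<Longrightarrow> x = y"
  unfolding conn_def by (induction rule: rtranclp_induct) blast+



locale gam =
  fixes V :: "nat \<Rightarrow> 'v set" and E :: "nat \<Rightarrow> 'e set" and ends :: "nat \<Rightarrow> 'e \<Rightarrow> 'v \<times> 'v"
    and a b :: "nat \<Rightarrow> 'v"
  assumes ends_in: "\<And>n e. e \<in> E n \<Longrightarrow> fst (ends n e) \<in> V n \<and> snd (ends n e) \<in> V n"
    and ab: "\<And>n. a n \<noteq> b n"
    and finV: "\<And>n. finite (V n)"
begin

definition ocp :: "(nat list \<times> 'e \<Rightarrow> bool) \<Rightarrow> nat list \<Rightarrow> 'v \<Rightarrow> 'v \<Rightarrow> bool" where
  "ocp \<omega> v x y = conn (ends (length v)) {e \<in> E (length v). \<omega> (v, e)} x y"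

definition cross :: "(nat list \<times> 'e \<Rightarrow> bool) \<Rightarrow> nat list \<Rightarrow> bool" where
  "cross \<omega> v = ocp \<omega> v (a (length v)) (b (length v))"

definition connG where "connG \<omega> = conn (Gamma_ends ends a b) {e \<in> Gamma_E E. \<omega> e}"

definition Rf :: "(nat list \<times> 'e \<Rightarrow> bool) \<Rightarrow> nat list \<Rightarrow> nat \<Rightarrow> bool" where
  "Rf \<omega> r m = (\<exists>s. length s = m \<and> r @ s \<in> T3 \<and> (\<forall>k\<in>{1..m}. cross \<omega> (r @ take k s)))"

definition cr :: "(nat list \<times> 'e \<Rightarrow> bool) \<Rightarrow> nat list \<Rightarrow> nat list \<Rightarrow> bool" where
  "cr \<omega> x y = ((y \<in> T3 \<and> y \<noteq> [] \<and> x = butlast y \<and> cross \<omega> y) \<or> (x \<in> T3 \<and> x \<noteq> [] \<and> y = butlast x \<and> cross \<omega> x))"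

definition DCR :: "(nat list \<times> 'e \<Rightarrow> bool) \<Rightarrow> nat list \<Rightarrow> nat list \<Rightarrow> bool" where
  "DCR \<omega> r w = (\<exists>s. w = r @ s \<and> w \<in> T3 \<and> (\<forall>k\<in>{1..length s}. cross \<omega> (r @ take k s)))"

lemma Gamma_ends_simp: "Gamma_ends ends a b (v, e) = (gmap a b v (fst (ends (length v) e)), gmap a b v (snd (ends (length v) e)))"
  by (simp add: Gamma_ends_def)

lemma in_GE: "(v, e) \<in> Gamma_E E \<longleftrightarrow> v \<in> T3 \<and> v \<noteq> [] \<and> e \<in> E (length v)"
  by (simp add: Gamma_E_def)

lemma ocp_edge: "e \<in> E (length v) \<Longrightarrow> \<omega> (v, e) \<Longrightarrow> ocp \<omega> v (fst (ends (length v) e)) (snd (ends (length v) e))"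
  unfolding ocp_def by (rule conn_edge[where e=e]) auto

lemma lift:
  assumes v: "v \<in> T3" "v \<noteq> []" and o: "ocp \<omega> v x y"
  shows "connG \<omega> (gmap a b v x) (gmap a b v y)"
  using o unfolding ocp_def conn_def[of "ends (length v)"]
proof (induction rule: rtranclp_induct)
  case base show ?case by (simp add: connG_def)
next
  case (step y z)
  then obtain e where e: "e \<in> E (length v)" "\<omega> (v, e)" "ends (length v) e = (y, z) \<or> ends (length v) e = (z, y)"
    by blast
  have ge: "(v, e) \<in> {e \<in> Gamma_E E. \<omega> e}" using e v by (simp add: in_GE)
  have "connG \<omega> (gmap a b v y) (gmap a b v z)"
  proof (cases "ends (length v) e = (y, z)")
    case True
    show ?thesis unfolding connG_def
      by (rule conn_edge[OF ge]) (simp add: Gamma_ends_simp True)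
  next
    case False
    hence "ends (length v) e = (z, y)" using e by auto
    hence "connG \<omega> (gmap a b v z) (gmap a b v y)" unfolding connG_def
      by (intro conn_edge[OF ge]) (simp add: Gamma_ends_simp)
    thus ?thesis unfolding connG_def by (rule conn_sym)
  qed
  with step.IH show ?case unfolding connG_def by (rule conn_trans)
qed

lemma gmap_a: "gmap a b v (a (length v)) = Inl (butlast v)" by (simp add: gmap_def)
lemma gmap_b: "gmap a b v (b (length v)) = Inl v"
proof -
  have "b (length v) \<noteq> a (length v)" using ab by metis
  thus ?thesis by (simp add: gmap_def)
qed

lemma cross_lift: "v \<in> T3 \<Longrightarrow> v \<noteq> [] \<Longrightarrow> cross \<omega> v \<Longrightarrow> connG \<omega> (Inl (butlast v)) (Inl v)"
  using lift[of v \<omega> "a (length v)" "b (length v)"] unfolding cross_def gmap_a gmap_b by simp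

lemma Rf_conn:
  assumes "length s = m" "r @ s \<in> T3" "\<forall>k\<in>{1..m}. cross \<omega> (r @ take k s)"
  shows "connG \<omega> (Inl r) (Inl (r @ s))"
proof -
  have "k \<le> m \<Longrightarrow> connG \<omega> (Inl r) (Inl (r @ take k s))" for k
  proof (induction k)
    case 0 show ?case by (simp add: connG_def)
  next
    case (Suc k)
    define v where "v = r @ take (Suc k) s"
    have vT: "v \<in> T3" unfolding v_def using T3_take[OF assms(2), of "length r + Suc k"] by simp
    have vn: "v \<noteq> []" unfolding v_def using Suc.prems assms(1) by (cases s) auto
    have tn: "take (Suc k) s \<noteq> []" using Suc.prems assms(1) by (cases s) auto
    have bl: "butlast v = r @ take k s" unfolding v_def using Suc.prems assms(1) tn
      by (simp add: butlast_append butlast_take)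
    have "cross \<omega> v" unfolding v_def using assms(3) Suc.prems by auto
    hence "connG \<omega> (Inl (r @ take k s)) (Inl v)" using cross_lift[OF vT vn] bl by simp
    with Suc show ?case unfolding connG_def v_def by (auto intro: conn_trans)
  qed
  from this[of m] show ?thesis using assms(1) by simp
qed

lemma Rf_infinite:
  assumes r: "r \<in> T3" and R: "\<forall>m. Rf \<omega> r m"
  shows "infinite {y. connG \<omega> (Inl r) y}"
proof
  assume fin: "finite {y. connG \<omega> (Inl r) y}"
  define g where "g = (\<lambda>y::nat list + (nat list \<times> 'v). case y of Inl w \<Rightarrow> length w | Inr _ \<Rightarrow> 0)"
  have "finite (g ` {y. connG \<omega> (Inl r) y})" using fin by simp
  then obtain B where B: "\<forall>x\<in>g ` {y. connG \<omega> (Inl r) y}. x \<le> B"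
    using finite_nat_set_iff_bounded_le by blast
  obtain s where s: "length s = Suc B" "r @ s \<in> T3" "\<forall>k\<in>{1..Suc B}. cross \<omega> (r @ take k s)"
    using R unfolding Rf_def by blast
  have "connG \<omega> (Inl r) (Inl (r @ s))" using Rf_conn[OF s] .
  hence "g (Inl (r @ s)) \<le> B" using B by blast
  thus False using s(1) by (simp add: g_def)
qed

end


context gam begin

definition H :: "(nat list \<times> 'e \<Rightarrow> bool) \<Rightarrow> nat list \<Rightarrow> nat list \<Rightarrow> 'v \<Rightarrow> bool" where
  "H \<omega> t v w = ((ocp \<omega> v (a (length v)) w \<and> (cr \<omega>)\<^sup>*\<^sup>* t (butlast v)) \<or> (ocp \<omega> v (b (length v)) w \<and> (cr \<omega>)\<^sup>*\<^sup>* t v))"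

definition Inv :: "(nat list \<times> 'e \<Rightarrow> bool) \<Rightarrow> nat list \<Rightarrow> nat list + (nat list \<times> 'v) \<Rightarrow> bool" where
  "Inv \<omega> t y = ((\<exists>t'. y = Inl t' \<and> t' \<in> T3 \<and> (cr \<omega>)\<^sup>*\<^sup>* t t') \<or>
     (\<exists>v z. y = Inr (v, z) \<and> v \<in> T3 \<and> v \<noteq> [] \<and> z \<in> V (length v) \<and> H \<omega> t v z))"

lemma ocp_refl[simp]: "ocp \<omega> v x x" by (simp add: ocp_def)
lemma ocp_sym: "ocp \<omega> v x y \<Longrightarrow> ocp \<omega> v y x" unfolding ocp_def by (rule conn_sym)
lemma ocp_trans: "ocp \<omega> v x y \<Longrightarrow> ocp \<omega> v y z \<Longrightarrow> ocp \<omega> v x z" unfolding ocp_def by (rule conn_trans)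

lemma LemA:
  assumes "Inv \<omega> t y" "y = gmap a b v w"
  shows "H \<omega> t v w"
proof (cases "w = a (length v)")
  case True
  hence "y = Inl (butlast v)" using assms(2) by (simp add: gmap_def)
  hence "(cr \<omega>)\<^sup>*\<^sup>* t (butlast v)" using assms(1) by (auto simp: Inv_def)
  thus ?thesis using True by (simp add: H_def)
next
  case F1: False
  show ?thesis
  proof (cases "w = b (length v)")
    case True
    hence "y = Inl v" using assms(2) F1 by (simp add: gmap_def)
    hence "(cr \<omega>)\<^sup>*\<^sup>* t v" using assms(1) by (auto simp: Inv_def)
    thus ?thesis using True by (simp add: H_def)
  next
    case False
    hence "y = Inr (v, w)" using assms(2) F1 by (simp add: gmap_def)
    thus ?thesis using assms(1) by (auto simp: Inv_def)
  qed
qed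

lemma LemB:
  assumes h: "H \<omega> t v w" and w: "w \<in> V (length v)" and v: "v \<in> T3" "v \<noteq> []"
  shows "Inv \<omega> t (gmap a b v w)"
proof (cases "w = a (length v)")
  case True
  have "(cr \<omega>)\<^sup>*\<^sup>* t (butlast v)"
  proof (cases "(cr \<omega>)\<^sup>*\<^sup>* t (butlast v)")
    case False
    hence "ocp \<omega> v (b (length v)) (a (length v)) \<and> (cr \<omega>)\<^sup>*\<^sup>* t v" using h True by (auto simp: H_def)
    hence "cross \<omega> v" "(cr \<omega>)\<^sup>*\<^sup>* t v" by (auto simp: cross_def intro: ocp_sym)
    moreover have "cr \<omega> v (butlast v)" using v \<open>cross \<omega> v\<close> by (simp add: cr_def)
    ultimately show ?thesis by (meson rtranclp.rtrancl_into_rtrancl)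
  qed
  thus ?thesis using True v by (simp add: gmap_def Inv_def T3_butlast)
next
  case F1: False
  show ?thesis
  proof (cases "w = b (length v)")
    case True
    have "(cr \<omega>)\<^sup>*\<^sup>* t v"
    proof (cases "(cr \<omega>)\<^sup>*\<^sup>* t v")
      case False
      hence "ocp \<omega> v (a (length v)) (b (length v)) \<and> (cr \<omega>)\<^sup>*\<^sup>* t (butlast v)" using h True by (auto simp: H_def)
      hence "cross \<omega> v" "(cr \<omega>)\<^sup>*\<^sup>* t (butlast v)" by (auto simp: cross_def)
      moreover have "cr \<omega> (butlast v) v" using v \<open>cross \<omega> v\<close> by (simp add: cr_def)
      ultimately show ?thesis by (meson rtranclp.rtrancl_into_rtrancl)
    qed
    thus ?thesis using True F1 v by (simp add: gmap_def Inv_def)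
  next
    case False
    thus ?thesis using F1 v w h by (simp add: gmap_def Inv_def)
  qed
qed

lemma H_trans: "H \<omega> t v w1 \<Longrightarrow> ocp \<omega> v w1 w2 \<Longrightarrow> H \<omega> t v w2"
  unfolding H_def by (auto intro: ocp_trans)

lemma InvL:
  assumes t: "t \<in> T3" and c: "connG \<omega> (Inl t) y"
  shows "Inv \<omega> t y"
  using c unfolding connG_def conn_def
proof (induction rule: rtranclp_induct)
  case base thus ?case using t by (simp add: Inv_def)
next
  case (step y y')
  then obtain ge where ge: "ge \<in> Gamma_E E" "\<omega> ge"
     "Gamma_ends ends a b ge = (y, y') \<or> Gamma_ends ends a b ge = (y', y)" by blast
  obtain v e where gv: "ge = (v, e)" by (cases ge)
  have v: "v \<in> T3" "v \<noteq> []" "e \<in> E (length v)" using ge(1) gv by (auto simp: in_GE)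
  define x1 where "x1 = fst (ends (length v) e)"
  define x2 where "x2 = snd (ends (length v) e)"
  have xV: "x1 \<in> V (length v)" "x2 \<in> V (length v)" using ends_in[OF v(3)] by (auto simp: x1_def x2_def)
  have o12: "ocp \<omega> v x1 x2" unfolding x1_def x2_def by (rule ocp_edge) (use v ge gv in auto)
  have ends: "Gamma_ends ends a b ge = (gmap a b v x1, gmap a b v x2)"
    unfolding gv x1_def x2_def by (rule Gamma_ends_simp)
  show ?case
  proof (cases "Gamma_ends ends a b ge = (y, y')")
    case True
    hence "y = gmap a b v x1" "y' = gmap a b v x2" using ends by auto
    thus ?thesis using LemA[OF step.IH] H_trans o12 LemB xV v by metis
  next
    case False
    hence "y' = gmap a b v x1" "y = gmap a b v x2" using ends ge(3) by auto
    thus ?thesis using LemA[OF step.IH] H_trans ocp_sym[OF o12] LemB xV v by metis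
  qed
qed

lemma finite_cluster:
  assumes t: "t \<in> T3" and L: "\<forall>t'. (cr \<omega>)\<^sup>*\<^sup>* t t' \<longrightarrow> length t' \<le> L"
  shows "finite {y. connG \<omega> (Inl t) y}"
proof -
  define B where "B = {w\<in>T3. length w \<le> Suc L}"
  define Z where "Z = (\<Union>n\<le>Suc L. V n)"
  have "{y. connG \<omega> (Inl t) y} \<subseteq> Inl ` B \<union> Inr ` (B \<times> Z)"
  proof
    fix y assume "y \<in> {y. connG \<omega> (Inl t) y}"
    hence I: "Inv \<omega> t y" using InvL[OF t] by simp
    show "y \<in> Inl ` B \<union> Inr ` (B \<times> Z)"
    proof (cases y)
      case (Inl t')
      thus ?thesis using I L by (auto simp: Inv_def B_def)
    next
      case (Inr vz)
      then obtain v z where y: "y = Inr (v, z)" by (cases vz) auto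
      hence vz: "v \<in> T3" "z \<in> V (length v)" "H \<omega> t v z" using I by (auto simp: Inv_def)
      have "length v \<le> Suc L"
      proof (cases "(cr \<omega>)\<^sup>*\<^sup>* t v")
        case True thus ?thesis using L by fastforce
      next
        case False
        hence "(cr \<omega>)\<^sup>*\<^sup>* t (butlast v)" using vz(3) by (auto simp: H_def)
        hence "length (butlast v) \<le> L" using L by blast
        thus ?thesis by simp
      qed
      hence "v \<in> B" "z \<in> Z" using vz by (auto simp: B_def Z_def)
      thus ?thesis using y by blast
    qed
  qed
  moreover have "finite B" unfolding B_def by (rule T3_finite_len)
  moreover have "finite Z" unfolding Z_def using finV by auto
  ultimately show ?thesis by (meson finite_SigmaI finite_UnI finite_imageI finite_subset)
qed

end


lemma pigeon:
  fixes Q :: "'a \<Rightarrow> nat \<Rightarrow> bool"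
  assumes F: "finite F" and all: "\<forall>L. \<exists>r\<in>F. Q r L" and mono: "\<And>r L L'. Q r L \<Longrightarrow> L' \<le> L \<Longrightarrow> Q r L'"
  shows "\<exists>r\<in>F. \<forall>L. Q r L"
proof (rule ccontr)
  assume "\<not> ?thesis"
  hence "\<forall>r\<in>F. \<exists>L. \<not> Q r L" by blast
  then obtain f where f: "\<forall>r\<in>F. \<not> Q r (f r)" by metis
  obtain r where r: "r \<in> F" "Q r (Max (f ` F))" using all by blast
  have "f r \<le> Max (f ` F)" using F r(1) by auto
  hence "Q r (f r)" using mono r(2) by blast
  thus False using f r(1) by blast
qed

context gam begin

lemma C1:
  assumes x: "x \<in> Gamma_V V a b" and inf: "infinite {y. connG \<omega> x y}"
  shows "\<exists>t\<in>T3. connG \<omega> x (Inl t)"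
proof (cases x)
  case (Inl t)
  thus ?thesis using x by (auto simp: Gamma_V_def connG_def intro!: bexI[where x=t])
next
  case (Inr vz)
  then obtain v z where xv: "x = Inr (v, z)" "v \<in> T3" "v \<noteq> []" "z \<in> V (length v)"
    using x by (auto simp: Gamma_V_def)
  show ?thesis
  proof (rule ccontr)
    assume no: "\<not> (\<exists>t\<in>T3. connG \<omega> x (Inl t))"
    have "connG \<omega> x y \<Longrightarrow> (\<exists>t\<in>T3. connG \<omega> x (Inl t)) \<or> (\<exists>z'. y = Inr (v, z') \<and> z' \<in> V (length v))" for y
      unfolding connG_def conn_def
    proof (induction rule: rtranclp_induct)
      case base thus ?case using xv by auto
    next
      case (step y y')
      show ?case
      proof (cases "\<exists>t\<in>T3. (\<lambda>x y. \<exists>e\<in>{e \<in> Gamma_E E. \<omega> e}. Gamma_ends ends a b e = (x, y) \<or> Gamma_ends ends a b e = (y, x))\<^sup>*\<^sup>* x (Inl t)")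
        case True thus ?thesis by blast
      next
        case False
        then obtain z' where y: "y = Inr (v, z')" using step.IH by blast
        obtain ge where ge: "ge \<in> Gamma_E E" "\<omega> ge"
          "Gamma_ends ends a b ge = (y, y') \<or> Gamma_ends ends a b ge = (y', y)" using step.hyps(2) by blast
        obtain v' e where gv: "ge = (v', e)" by (cases ge)
        have v': "v' \<in> T3" "v' \<noteq> []" "e \<in> E (length v')" using ge(1) gv by (auto simp: in_GE)
        define x1 where "x1 = fst (ends (length v') e)"
        define x2 where "x2 = snd (ends (length v') e)"
        have xV: "x1 \<in> V (length v')" "x2 \<in> V (length v')" using ends_in[OF v'(3)] by (auto simp: x1_def x2_def)
        have ends: "Gamma_ends ends a b ge = (gmap a b v' x1, gmap a b v' x2)"
          unfolding gv x1_def x2_def by (rule Gamma_ends_simp)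
        obtain w1 w2 where w: "y = gmap a b v' w1" "y' = gmap a b v' w2" "w2 \<in> V (length v')"
          using ge(3) ends xV by auto
        have "v' = v" using w(1) y by (auto simp: gmap_def split: if_splits)
        have reach: "(\<lambda>x y. \<exists>e\<in>{e \<in> Gamma_E E. \<omega> e}. Gamma_ends ends a b e = (x, y) \<or> Gamma_ends ends a b e = (y, x))\<^sup>*\<^sup>* x y'"
          using step.hyps by (rule rtranclp.rtrancl_into_rtrancl)
        show ?thesis
        proof (cases "w2 = a (length v') \<or> w2 = b (length v')")
          case True
          hence "y' = Inl (butlast v') \<or> y' = Inl v'" using w(2) by (auto simp: gmap_def)
          thus ?thesis using reach v' T3_butlast by blast
        next
          case False
          hence "y' = Inr (v, w2)" using w(2) \<open>v' = v\<close> by (simp add: gmap_def)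
          thus ?thesis using w(3) \<open>v' = v\<close> by blast
        qed
      qed
    qed
    hence "{y. connG \<omega> x y} \<subseteq> Inr ` ({v} \<times> V (length v))" using no by blast
    hence "finite {y. connG \<omega> x y}" by (rule finite_subset) (use finV in auto)
    thus False using inf by simp
  qed
qed

lemma DCR_refl: "t \<in> T3 \<Longrightarrow> DCR \<omega> t t"
  unfolding DCR_def by (intro exI[of _ "[]"]) auto

lemma C3:
  assumes t: "t \<in> T3" and c: "(cr \<omega>)\<^sup>*\<^sup>* t t'"
  shows "\<exists>r. DCR \<omega> r t \<and> DCR \<omega> r t'"
  using c
proof (induction rule: rtranclp_induct)
  case base thus ?case using DCR_refl[OF t] by blast
next
  case (step y y')
  then obtain r where r: "DCR \<omega> r t" "DCR \<omega> r y" by blast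
  from r(2) obtain s where s: "y = r @ s" "y \<in> T3" "\<forall>k\<in>{1..length s}. cross \<omega> (r @ take k s)"
    unfolding DCR_def by blast
  show ?case
  proof (cases "y' \<in> T3 \<and> y' \<noteq> [] \<and> y = butlast y' \<and> cross \<omega> y'")
    case True
    define c where "c = last y'"
    have y': "y' = r @ (s @ [c])" using True s(1) unfolding c_def by (metis append_assoc append_butlast_last_id)
    have "DCR \<omega> r y'" unfolding DCR_def
    proof (intro exI[of _ "s @ [c]"] conjI ballI)
      show "y' = r @ s @ [c]" by (rule y')
      show "y' \<in> T3" using True by blast
    next
      fix k assume k: "k \<in> {1..length (s @ [c])}"
      show "cross \<omega> (r @ take k (s @ [c]))"
      proof (cases "k \<le> length s")
        case True thus ?thesis using s(3) k by auto
      next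
        case False
        hence "k = Suc (length s)" using k by auto
        hence "r @ take k (s @ [c]) = y'" using y' by simp
        thus ?thesis using \<open>y' \<in> T3 \<and> y' \<noteq> [] \<and> y = butlast y' \<and> cross \<omega> y'\<close> by simp
      qed
    qed
    thus ?thesis using r(1) by blast
  next
    case False
    hence y2: "y \<in> T3" "y \<noteq> []" "y' = butlast y" "cross \<omega> y" using step.hyps(2) by (auto simp: cr_def)
    show ?thesis
    proof (cases "s = []")
      case False
      have "DCR \<omega> r y'" unfolding DCR_def
      proof (intro exI[of _ "butlast s"] conjI ballI)
        show "y' = r @ butlast s" using y2(3) s(1) False by (simp add: butlast_append)
        show "y' \<in> T3" using y2 T3_butlast by simp
      next
        fix k assume k: "k \<in> {1..length (butlast s)}"
        hence "k < length s" using False by auto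
        hence "take k (butlast s) = take k s" by (simp add: take_butlast)
        thus "cross \<omega> (r @ take k (butlast s))" using s(3) k by auto
      qed
      thus ?thesis using r(1) by blast
    next
      case True
      hence yr: "y = r" using s(1) by simp
      define r' where "r' = butlast r"
      define l where "l = last r"
      have rr: "r = r' @ [l]" using y2(2) yr unfolding r'_def l_def by simp
      have "DCR \<omega> r' y'" unfolding DCR_def
        by (intro exI[of _ "[]"]) (use y2 yr r'_def T3_butlast in auto)
      moreover have "DCR \<omega> r' t"
      proof -
        from r(1) obtain st where st: "t = r @ st" "t \<in> T3" "\<forall>k\<in>{1..length st}. cross \<omega> (r @ take k st)"
          unfolding DCR_def by blast
        show ?thesis unfolding DCR_def
        proof (intro exI[of _ "l # st"] conjI ballI)
          show "t = r' @ l # st" using st(1) rr by simp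
          show "t \<in> T3" by (rule st(2))
        next
          fix k assume k: "k \<in> {1..length (l # st)}"
          show "cross \<omega> (r' @ take k (l # st))"
          proof (cases k)
            case 0 thus ?thesis using k by simp
          next
            case (Suc k')
            show ?thesis
            proof (cases k')
              case 0
              thus ?thesis using Suc y2(4) yr rr by simp
            next
              case (Suc k'')
              have "r' @ take k (l # st) = r @ take k' st" using \<open>k = Suc k'\<close> rr by simp
              moreover have "k' \<in> {1..length st}" using k \<open>k = Suc k'\<close> Suc by auto
              ultimately show ?thesis using st(3) by simp
            qed
          qed
        qed
      qed
      ultimately show ?thesis by blast
    qed
  qed
qed

lemma C4:
  assumes d: "DCR \<omega> r w" and len: "length r + m \<le> length w"
  shows "Rf \<omega> r m"
proof -
  from d obtain s where s: "w = r @ s" "w \<in> T3" "\<forall>k\<in>{1..length s}. cross \<omega> (r @ take k s)"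
    unfolding DCR_def by blast
  have m: "m \<le> length s" using len s(1) by simp
  show ?thesis unfolding Rf_def
  proof (intro exI[of _ "take m s"] conjI ballI)
    show "length (take m s) = m" using m by simp
    have "r @ take m s = take (length r + m) w" using s(1) by simp
    thus "r @ take m s \<in> T3" using T3_take[OF s(2)] by simp
  next
    fix k assume k: "k \<in> {1..m}"
    hence "take k (take m s) = take k s" by (simp add: min_def)
    thus "cross \<omega> (r @ take k (take m s))" using s(3) k m by auto
  qed
qed

lemma DCR_prefix: "DCR \<omega> r w \<Longrightarrow> r \<in> (\<lambda>k. take k w) ` {..length w}"
  unfolding DCR_def by (auto intro!: image_eqI[where x="length r"])

lemma Rf_mono: "Rf \<omega> r (Suc m) \<Longrightarrow> Rf \<omega> r m"
proof -
  assume "Rf \<omega> r (Suc m)"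
  then obtain s where s: "length s = Suc m" "r @ s \<in> T3" "\<forall>k\<in>{1..Suc m}. cross \<omega> (r @ take k s)"
    unfolding Rf_def by blast
  have "DCR \<omega> r (r @ s)" unfolding DCR_def using s by auto
  thus "Rf \<omega> r m" by (rule C4) (use s in simp)
qed

lemma main_comb:
  "(\<exists>x\<in>Gamma_V V a b. infinite {y. connG \<omega> x y}) \<longleftrightarrow> (\<exists>r\<in>T3. \<forall>m. Rf \<omega> r m)"
proof
  assume "\<exists>r\<in>T3. \<forall>m. Rf \<omega> r m"
  then obtain r where "r \<in> T3" "\<forall>m. Rf \<omega> r m" by blast
  moreover have "Inl r \<in> Gamma_V V a b" using \<open>r \<in> T3\<close> by (simp add: Gamma_V_def)
  ultimately show "\<exists>x\<in>Gamma_V V a b. infinite {y. connG \<omega> x y}" using Rf_infinite by blast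
next
  assume "\<exists>x\<in>Gamma_V V a b. infinite {y. connG \<omega> x y}"
  then obtain x where x: "x \<in> Gamma_V V a b" "infinite {y. connG \<omega> x y}" by blast
  obtain t where t: "t \<in> T3" "connG \<omega> x (Inl t)" using C1[OF x] by blast
  have "{y. connG \<omega> x y} \<subseteq> {y. connG \<omega> (Inl t) y}"
    using t(2) unfolding connG_def by (auto intro: conn_trans conn_sym)
  hence inf: "infinite {y. connG \<omega> (Inl t) y}" using x(2) finite_subset by blast
  define F where "F = (\<lambda>k. take k t) ` {..length t}"
  have all: "\<forall>L. \<exists>r\<in>F. \<exists>w. DCR \<omega> r w \<and> L \<le> length w"
  proof
    fix L
    obtain t' where t': "(cr \<omega>)\<^sup>*\<^sup>* t t'" "\<not> length t' \<le> L"
      using finite_cluster[OF t(1), of \<omega> L] inf by blast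
    obtain r where "DCR \<omega> r t" "DCR \<omega> r t'" using C3[OF t(1) t'(1)] by blast
    thus "\<exists>r\<in>F. \<exists>w. DCR \<omega> r w \<and> L \<le> length w" using t'(2) DCR_prefix unfolding F_def
      by (metis nat_le_linear)
  qed
  obtain r where r: "r \<in> F" "\<forall>L. \<exists>w. DCR \<omega> r w \<and> L \<le> length w"
    using pigeon[OF _ all] unfolding F_def by (auto intro: le_trans)
  have "r \<in> T3" using r(1) t(1) T3_take unfolding F_def by auto
  moreover have "\<forall>m. Rf \<omega> r m"
  proof
    fix m obtain w where "DCR \<omega> r w" "length r + m \<le> length w" using r(2) by blast
    thus "Rf \<omega> r m" by (rule C4)
  qed
  ultimately show "\<exists>r\<in>T3. \<forall>m. Rf \<omega> r m" by blast
qed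

end


lemma conn_mono: "S \<subseteq> S' \<Longrightarrow> conn ends S x y \<Longrightarrow> conn ends S' x y"
  unfolding conn_def
proof -
  assume S: "S \<subseteq> S'" and c: "(\<lambda>x y. \<exists>e\<in>S. ends e = (x, y) \<or> ends e = (y, x))\<^sup>*\<^sup>* x y"
  from c show "(\<lambda>x y. \<exists>e\<in>S'. ends e = (x, y) \<or> ends e = (y, x))\<^sup>*\<^sup>* x y"
  proof (induction rule: rtranclp_induct)
    case base show ?case by simp
  next
    case (step y z)
    from step.hyps(2) obtain e where "e \<in> S" "ends e = (y, z) \<or> ends e = (z, y)" by blast
    hence "\<exists>e\<in>S'. ends e = (y, z) \<or> ends e = (z, y)" using S by blast
    with step.IH show ?case by (rule rtranclp.rtrancl_into_rtrancl)
  qed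
qed

definition dep :: "'i set \<Rightarrow> (('i \<Rightarrow> bool) \<Rightarrow> bool) \<Rightarrow> bool" where
  "dep J Q \<longleftrightarrow> (\<forall>\<omega>. Q (restrict \<omega> J) = Q \<omega>)"

lemma dep_mono: "dep J' Q \<Longrightarrow> J' \<subseteq> J \<Longrightarrow> dep J Q"
  unfolding dep_def by (metis Int_absorb1 inf_commute restrict_restrict)

lemma dep_set: "dep J Q \<Longrightarrow> {\<omega>\<in>space M. Q \<omega>} = {\<omega>\<in>space M. Q (restrict \<omega> J)}"
  unfolding dep_def by auto

lemma perc_meas_dep:
  assumes "finite J" "J \<subseteq> I" "dep J Q"
  shows "{\<omega>\<in>space (perc_measure I q). Q \<omega>} \<in> sets (perc_measure I q)"
proof -
  define X where "X = {f\<in>space (perc_measure J q). Q f}"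
  have X: "X \<in> sets (perc_measure J q)" unfolding X_def using assms(1) by (intro perc_sets_all) auto
  have m: "(\<lambda>\<omega>. restrict \<omega> J) \<in> measurable (perc_measure I q) (perc_measure J q)"
    unfolding perc_measure_def using assms(2) by (rule measurable_restrict_subset)
  have "(\<lambda>\<omega>. restrict \<omega> J) -` X \<inter> space (perc_measure I q) = {\<omega>\<in>space (perc_measure I q). Q \<omega>}"
    using assms(3) unfolding X_def dep_def by (auto simp: perc_space)
  with measurable_sets[OF m X] show ?thesis by simp
qed

lemma perc_indep_dep:
  assumes "finite J1" "finite J2" "J1 \<subseteq> I" "J2 \<subseteq> I" "J1 \<inter> J2 = {}" "dep J1 Q1" "dep J2 Q2"
  shows "measure (perc_measure I q) {\<omega>\<in>space (perc_measure I q). Q1 \<omega> \<and> Q2 \<omega>}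
    = measure (perc_measure I q) {\<omega>\<in>space (perc_measure I q). Q1 \<omega>}
      * measure (perc_measure I q) {\<omega>\<in>space (perc_measure I q). Q2 \<omega>}"
proof -
  have "{\<omega>\<in>space (perc_measure I q). Q1 \<omega> \<and> Q2 \<omega>} = {\<omega>\<in>space (perc_measure I q). Q1 (restrict \<omega> J1) \<and> Q2 (restrict \<omega> J2)}"
    using assms(6,7) unfolding dep_def by auto
  thus ?thesis using perc_indep[OF assms(1-5), where ?P1.0=Q1 and ?P2.0=Q2 and q=q] dep_set[OF assms(6)] dep_set[OF assms(7)] by simp
qed

locale gamp = gam V E ends a b for V :: "nat \<Rightarrow> 'v set" and E :: "nat \<Rightarrow> 'e set" and ends a b +
  assumes finE: "\<And>n. finite (E n)"
begin

definition Blk :: "nat list \<Rightarrow> (nat list \<times> 'e) set" where "Blk v = {v} \<times> E (length v)"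
definition Blks :: "nat list set \<Rightarrow> (nat list \<times> 'e) set" where "Blks W = Sigma W (\<lambda>v. E (length v))"
definition Dn :: "nat list \<Rightarrow> nat \<Rightarrow> nat list set" where
  "Dn r m = {w\<in>T3. \<exists>s. w = r @ s \<and> s \<noteq> [] \<and> length s \<le> m}"
definition hh :: "nat \<Rightarrow> real \<Rightarrow> real" where "hh n q = h_conn (E n) (ends n) (a n) (b n) q"

abbreviation "Om q \<equiv> perc_measure (Gamma_E E) q"

lemma Blk_fin: "finite (Blk v)" by (simp add: Blk_def finE)
lemma Blks_fin: "finite W \<Longrightarrow> finite (Blks W)" by (simp add: Blks_def finE)
lemma Blk_sub: "v \<in> T3 \<Longrightarrow> v \<noteq> [] \<Longrightarrow> Blk v \<subseteq> Gamma_E E" by (auto simp: Blk_def Gamma_E_def)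
lemma Blks_sub: "W \<subseteq> T3 - {[]} \<Longrightarrow> Blks W \<subseteq> Gamma_E E" by (auto simp: Blks_def Gamma_E_def)
lemma Blk_Blks: "v \<in> W \<Longrightarrow> Blk v \<subseteq> Blks W" by (auto simp: Blk_def Blks_def)

lemma Dn_fin: "finite (Dn r m)"
proof -
  have "Dn r m \<subseteq> {w\<in>T3. length w \<le> length r + m}" by (auto simp: Dn_def)
  thus ?thesis using T3_finite_len finite_subset by blast
qed

lemma Dn_sub: "Dn r m \<subseteq> T3 - {[]}" by (auto simp: Dn_def)

lemma dep_cross: "dep (Blk v) (\<lambda>\<omega>. cross \<omega> v)"
proof -
  have "{e \<in> E (length v). restrict \<omega> (Blk v) (v, e)} = {e \<in> E (length v). \<omega> (v, e)}" for \<omega>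
    by (auto simp: Blk_def)
  thus ?thesis unfolding dep_def cross_def ocp_def by simp
qed

lemma dep_cross': "v \<in> W \<Longrightarrow> dep (Blks W) (\<lambda>\<omega>. cross \<omega> v)"
  by (rule dep_mono[OF dep_cross Blk_Blks])

lemma dep_all: "dep J (\<lambda>\<omega>. \<forall>v\<in>W. P v \<omega>)" if "\<And>v. v \<in> W \<Longrightarrow> dep J (P v)"
  using that unfolding dep_def by simp

lemma dep_Rf: "dep (Blks (Dn r m)) (\<lambda>\<omega>. Rf \<omega> r m)"
proof -
  have c: "cross (restrict \<omega> (Blks (Dn r m))) (r @ take k s) = cross \<omega> (r @ take k s)"
    if "length s = m" "r @ s \<in> T3" "k \<in> {1..m}" for \<omega> s k
  proof -
    have "r @ take k s \<in> Dn r m" unfolding Dn_def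
    proof (intro CollectI conjI exI)
      show "r @ take k s \<in> T3" using T3_take[OF that(2), of "length r + k"] by simp
      show "take k s \<noteq> []" using that by (cases s) auto
      show "length (take k s) \<le> m" using that by simp
    qed simp
    thus ?thesis using dep_cross'[of "r @ take k s" "Dn r m"] unfolding dep_def by simp
  qed
  show ?thesis unfolding dep_def Rf_def
  proof (intro allI iffI; elim exE conjE)
    fix \<omega> s assume "length s = m" "r @ s \<in> T3" "\<forall>k\<in>{1..m}. cross (restrict \<omega> (Blks (Dn r m))) (r @ take k s)"
    thus "\<exists>s. length s = m \<and> r @ s \<in> T3 \<and> (\<forall>k\<in>{1..m}. cross \<omega> (r @ take k s))" using c by metis
  next
    fix \<omega> s assume "length s = m" "r @ s \<in> T3" "\<forall>k\<in>{1..m}. cross \<omega> (r @ take k s)"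
    thus "\<exists>s. length s = m \<and> r @ s \<in> T3 \<and> (\<forall>k\<in>{1..m}. cross (restrict \<omega> (Blks (Dn r m))) (r @ take k s))" using c by metis
  qed
qed

lemma ps: "prob_space (Om q)" by (rule perc_prob_space)

lemma hh_nonneg: "0 \<le> hh n q" by (simp add: hh_def h_conn_def)
lemma hh_le1: "hh n q \<le> 1" by (simp add: hh_def h_conn_def)

lemma prob_cross:
  assumes v: "v \<in> T3" "v \<noteq> []"
  shows "measure (Om q) {\<omega>\<in>space (Om q). cross \<omega> v} = hh (length v) q"
proof -
  let ?B = "\<lambda>_. bernoulli_pmf q"
  have "measure (Om q) {\<omega>\<in>space (Om q). cross \<omega> v} = measure (Om q) {\<omega>\<in>space (Om q). cross (restrict \<omega> (Blk v)) v}"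
    using dep_set[OF dep_cross] by metis
  also have "\<dots> = measure_pmf.prob (Pi_pmf (Blk v) False ?B) {\<sigma>. cross (restrict \<sigma> (Blk v)) v}"
    by (rule perc_bridge[OF Blk_fin Blk_sub[OF v]])
  also have "{\<sigma>. cross (restrict \<sigma> (Blk v)) v} = {\<sigma>. cross \<sigma> v}"
    using dep_cross[of v] unfolding dep_def by simp
  also have "measure_pmf.prob (Pi_pmf (Blk v) False ?B) {\<sigma>. cross \<sigma> v}
      = measure_pmf.prob (map_pmf (\<lambda>g. g \<circ> Pair v) (Pi_pmf (Blk v) False ?B))
          {\<tau>. conn (ends (length v)) {e \<in> E (length v). \<tau> e} (a (length v)) (b (length v))}"
    by (simp add: measure_map_pmf vimage_def cross_def ocp_def)
  also have "map_pmf (\<lambda>g. g \<circ> Pair v) (Pi_pmf (Blk v) False ?B) = Pi_pmf (E (length v)) False ?B"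
    by (rule Pi_pmf_bij_betw[symmetric]) (auto simp: finE Blk_def bij_betw_def inj_on_def)
  finally show ?thesis by (simp add: hh_def h_conn_def)
qed

lemma prob_path:
  assumes "finite W" "W \<subseteq> T3 - {[]}"
  shows "measure (Om q) {\<omega>\<in>space (Om q). \<forall>v\<in>W. cross \<omega> v} = (\<Prod>v\<in>W. hh (length v) q)"
  using assms
proof (induction W rule: finite_induct)
  case empty
  thus ?case using prob_space.prob_space[OF ps] by simp
next
  case (insert w W)
  have d1: "dep (Blk w) (\<lambda>\<omega>. cross \<omega> w)" by (rule dep_cross)
  have d2: "dep (Blks W) (\<lambda>\<omega>. \<forall>v\<in>W. cross \<omega> v)" by (intro dep_all dep_cross')
  have disj: "Blk w \<inter> Blks W = {}" using insert.hyps(2) by (auto simp: Blk_def Blks_def)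
  have "{\<omega>\<in>space (Om q). \<forall>v\<in>insert w W. cross \<omega> v} = {\<omega>\<in>space (Om q). cross \<omega> w \<and> (\<forall>v\<in>W. cross \<omega> v)}"
    by auto
  hence "measure (Om q) {\<omega>\<in>space (Om q). \<forall>v\<in>insert w W. cross \<omega> v}
      = measure (Om q) {\<omega>\<in>space (Om q). cross \<omega> w} * measure (Om q) {\<omega>\<in>space (Om q). \<forall>v\<in>W. cross \<omega> v}"
    using perc_indep_dep[OF Blk_fin Blks_fin[OF insert.hyps(1)] Blk_sub Blks_sub disj d1 d2] insert.prems by auto
  thus ?case using insert prob_cross[of w q] by simp
qed

lemma meas_cross_all: "finite W \<Longrightarrow> W \<subseteq> T3 - {[]} \<Longrightarrow> {\<omega>\<in>space (Om q). \<forall>v\<in>W. cross \<omega> v} \<in> sets (Om q)"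
  by (rule perc_meas_dep[OF Blks_fin Blks_sub]) (auto intro: dep_all dep_cross')

lemma meas_Rf: "{\<omega>\<in>space (Om q). Rf \<omega> r m} \<in> sets (Om q)"
  by (rule perc_meas_dep[OF Blks_fin[OF Dn_fin] Blks_sub[OF Dn_sub] dep_Rf])

end


lemma dep_conj: "dep J P \<Longrightarrow> dep J Q \<Longrightarrow> dep J (\<lambda>\<omega>. P \<omega> \<and> Q \<omega>)" unfolding dep_def by simp
lemma dep_not: "dep J P \<Longrightarrow> dep J (\<lambda>\<omega>. \<not> P \<omega>)" unfolding dep_def by simp

lemma arith1:
  fixes h0 h p0 p1 :: real
  assumes h0: "1/2 < h0" "h0 \<le> 1" and h: "h0 \<le> h" "h \<le> 1"
    and p: "(2*h0-1)/h0^2 \<le> p0" "p0 \<le> 1" "(2*h0-1)/h0^2 \<le> p1" "p1 \<le> 1"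
  shows "(2*h0-1)/h0^2 \<le> 1 - (1 - h * p0) * (1 - h * p1)"
proof -
  define x where "x = (2*h0-1)/h0^2"
  have x0: "0 \<le> x" using h0 by (simp add: x_def)
  have hx: "h0 * x = (2*h0-1)/h0" using h0 by (simp add: x_def power2_eq_square)
  have hx1: "h0 * x \<le> 1" using h0 unfolding hx by (simp add: divide_le_eq)
  have a0: "h0 * x \<le> h * p0" using h p x0 h0 unfolding x_def[symmetric] by (intro mult_mono) auto
  have a1: "h0 * x \<le> h * p1" using h p x0 h0 unfolding x_def[symmetric] by (intro mult_mono) auto
  have p00: "0 \<le> p0" "0 \<le> p1" using p(1,3) x0 unfolding x_def by linarith+
  have b0: "h * p0 \<le> 1" using h p p00 h0 by (intro mult_le_one) auto
  have b1: "h * p1 \<le> 1" using h p p00 h0 by (intro mult_le_one) auto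
  have "(1 - h * p0) * (1 - h * p1) \<le> (1 - h0 * x) * (1 - h0 * x)"
    using a0 a1 b0 b1 by (intro mult_mono) auto
  also have "\<dots> = 1 - x" using h0 unfolding x_def by (simp add: field_simps power2_eq_square)
  finally show ?thesis unfolding x_def by simp
qed

context gamp begin

lemma prod_bound:
  assumes N: "\<forall>k\<ge>N. hh k q \<le> c" and c: "0 < c" "c \<le> 1"
  shows "(\<Prod>k\<in>{1..m}. hh (L + k) q) \<le> c ^ (m - N)"
proof (induction m)
  case 0 thus ?case by simp
next
  case (Suc m)
  have eq: "(\<Prod>k\<in>{1..Suc m}. hh (L + k) q) = hh (L + Suc m) q * (\<Prod>k\<in>{1..m}. hh (L + k) q)"
    by (simp add: atLeastAtMostSuc_conv)
  show ?case
  proof (cases "Suc m \<le> N")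
    case True
    have "(\<Prod>k\<in>{1..Suc m}. hh (L + k) q) \<le> 1" by (intro prod_le_1) (auto simp: hh_nonneg hh_le1)
    thus ?thesis using True by simp
  next
    case False
    have "hh (L + Suc m) q \<le> c" using N False by auto
    hence "(\<Prod>k\<in>{1..Suc m}. hh (L + k) q) \<le> c * c ^ (m - N)"
      unfolding eq using Suc.IH c by (intro mult_mono) (auto simp: hh_nonneg prod_nonneg)
    also have "\<dots> = c ^ (Suc m - N)" using False by (simp add: Suc_diff_le)
    finally show ?thesis .
  qed
qed

lemma prob_Rf_le:
  assumes r: "r \<in> T3"
  shows "measure (Om q) {\<omega>\<in>space (Om q). Rf \<omega> r m} \<le> 3 * 2 ^ m * (\<Prod>k\<in>{1..m}. hh (length r + k) q)"
proof -
  interpret prob_space "Om q" by (rule ps)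
  define SS where "SS = {s. length s = m \<and> r @ s \<in> T3}"
  define PW where "PW = (\<lambda>s. (\<lambda>k. r @ take k s) ` {1..m})"
  have SS: "finite SS" "card SS \<le> 3 * 2 ^ m" using card_ext[OF r, of m] unfolding SS_def by auto
  have PW: "finite (PW s)" "PW s \<subseteq> T3 - {[]}" if "s \<in> SS" for s
  proof -
    show "finite (PW s)" unfolding PW_def by simp
    show "PW s \<subseteq> T3 - {[]}" unfolding PW_def
    proof
      fix w assume "w \<in> (\<lambda>k. r @ take k s) ` {1..m}"
      then obtain k where k: "k \<in> {1..m}" "w = r @ take k s" by blast
      have "w \<in> T3" using T3_take[of "r @ s" "length r + k"] that k unfolding SS_def by simp
      moreover have "w \<noteq> []" using k that unfolding SS_def by (cases s) auto
      ultimately show "w \<in> T3 - {[]}" by simp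
    qed
  qed
  have eq: "{\<omega>\<in>space (Om q). Rf \<omega> r m} = (\<Union>s\<in>SS. {\<omega>\<in>space (Om q). \<forall>v\<in>PW s. cross \<omega> v})"
    unfolding Rf_def SS_def PW_def by auto
  have pr: "measure (Om q) {\<omega>\<in>space (Om q). \<forall>v\<in>PW s. cross \<omega> v} = (\<Prod>k\<in>{1..m}. hh (length r + k) q)"
    if s: "s \<in> SS" for s
  proof -
    have inj: "inj_on (\<lambda>k. r @ take k s) {1..m}"
    proof (rule inj_onI)
      fix x y assume "x \<in> {1..m}" "y \<in> {1..m}" "r @ take x s = r @ take y s"
      hence "length (r @ take x s) = length (r @ take y s)" by simp
      thus "x = y" using \<open>x \<in> {1..m}\<close> \<open>y \<in> {1..m}\<close> s unfolding SS_def by auto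
    qed
    have "measure (Om q) {\<omega>\<in>space (Om q). \<forall>v\<in>PW s. cross \<omega> v} = (\<Prod>v\<in>PW s. hh (length v) q)"
      by (rule prob_path[OF PW[OF s]])
    also have "\<dots> = (\<Prod>k\<in>{1..m}. hh (length (r @ take k s)) q)"
      unfolding PW_def by (rule prod.reindex[OF inj, unfolded comp_def])
    also have "\<dots> = (\<Prod>k\<in>{1..m}. hh (length r + k) q)"
      using s unfolding SS_def by (intro prod.cong) auto
    finally show ?thesis .
  qed
  have "measure (Om q) {\<omega>\<in>space (Om q). Rf \<omega> r m} \<le> (\<Sum>s\<in>SS. measure (Om q) {\<omega>\<in>space (Om q). \<forall>v\<in>PW s. cross \<omega> v})"
    unfolding eq using SS(1) PW meas_cross_all by (intro finite_measure_subadditive_finite) auto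
  also have "\<dots> = card SS * (\<Prod>k\<in>{1..m}. hh (length r + k) q)" using pr by simp
  also have "\<dots> \<le> 3 * 2 ^ m * (\<Prod>k\<in>{1..m}. hh (length r + k) q)"
  proof -
    have "real (card SS) \<le> real (3 * 2 ^ m)" using SS(2) by (rule of_nat_mono)
    thus ?thesis by (intro mult_right_mono) (auto simp: prod_nonneg hh_nonneg)
  qed
  finally show ?thesis .
qed

lemma null_Rf:
  assumes r: "r \<in> T3" and N: "\<forall>k\<ge>N. hh k q \<le> c" and c: "0 < c" "c < 1/2"
  shows "(\<Inter>m. {\<omega>\<in>space (Om q). Rf \<omega> r m}) \<in> null_sets (Om q)"
proof -
  interpret prob_space "Om q" by (rule ps)
  let ?X = "\<Inter>m. {\<omega>\<in>space (Om q). Rf \<omega> r m}"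
  have Xs: "?X \<in> sets (Om q)" using meas_Rf by (intro sets.countable_INT) auto
  define g where "g = (\<lambda>j::nat. 3 * 2 ^ N * (2 * c) ^ j)"
  have le: "measure (Om q) ?X \<le> g j" for j
  proof -
    have "measure (Om q) ?X \<le> measure (Om q) {\<omega>\<in>space (Om q). Rf \<omega> r (N + j)}"
      using meas_Rf by (intro finite_measure_mono) auto
    also have "\<dots> \<le> 3 * 2 ^ (N + j) * (\<Prod>k\<in>{1..N+j}. hh (length r + k) q)" by (rule prob_Rf_le[OF r])
    also have "\<dots> \<le> 3 * 2 ^ (N + j) * c ^ (N + j - N)"
    proof -
      have "(\<Prod>k\<in>{1..N+j}. hh (length r + k) q) \<le> c ^ (N + j - N)"
        by (rule prod_bound[OF N c(1)]) (use c in simp)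
      thus ?thesis by (intro mult_left_mono) auto
    qed
    also have "\<dots> = g j" unfolding g_def by (simp add: power_add power_mult_distrib)
    finally show ?thesis .
  qed
  have "g \<longlonglongrightarrow> 3 * 2 ^ N * 0" unfolding g_def using c by (intro tendsto_mult LIMSEQ_power_zero) auto
  hence "measure (Om q) ?X \<le> 0" using le by (intro LIMSEQ_le_const[of g 0]) auto
  hence "measure (Om q) ?X = 0" by (simp add: measure_nonneg order_antisym)
  thus ?thesis using Xs by (simp add: emeasure_eq_measure null_sets_def)
qed

lemma theta_eq:
  "theta_inf (Gamma_V V a b) (Gamma_E E) (Gamma_ends ends a b) q
     = measure (Om q) (\<Union>r\<in>T3. \<Inter>m. {\<omega>\<in>space (Om q). Rf \<omega> r m})"
proof -
  have "{\<omega> \<in> space (Om q). \<exists>x\<in>Gamma_V V a b. infinite {y. conn (Gamma_ends ends a b) {e \<in> Gamma_E E. \<omega> e} x y}}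
     = {\<omega>\<in>space (Om q). \<exists>r\<in>T3. \<forall>m. Rf \<omega> r m}"
    using main_comb unfolding connG_def by simp
  also have "\<dots> = (\<Union>r\<in>T3. \<Inter>m. {\<omega>\<in>space (Om q). Rf \<omega> r m})" by auto
  finally show ?thesis by (simp add: theta_inf_def)
qed
lemma theta_sets: "(\<Union>r\<in>T3. \<Inter>m. {\<omega>\<in>space (Om q). Rf \<omega> r m}) \<in> sets (Om q)"
  using meas_Rf by (intro sets.countable_UN sets.countable_INT) auto

lemma thetaA:
  assumes ls: "limsup (\<lambda>n. ereal (hh n q)) < ereal (1/2)"
  shows "theta_inf (Gamma_V V a b) (Gamma_E E) (Gamma_ends ends a b) q = 0"
proof -
  interpret prob_space "Om q" by (rule ps)
  obtain z where z: "limsup (\<lambda>n. ereal (hh n q)) < ereal z" "ereal z < ereal (1/2)"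
    using ereal_dense2[OF ls] by blast
  define c where "c = max z (1/4)"
  have c: "0 < c" "c < 1/2" using z(2) by (auto simp: c_def)
  have "eventually (\<lambda>n. ereal (hh n q) < ereal z) sequentially" by (rule Limsup_lessD[OF z(1)])
  then obtain N where N: "\<forall>n\<ge>N. hh n q < z" by (auto simp: eventually_sequentially)
  hence N': "\<forall>n\<ge>N. hh n q \<le> c" by (auto simp: c_def intro: less_imp_le le_max_iff_disj[THEN iffD2])
  have "(\<Union>r\<in>T3. \<Inter>m. {\<omega>\<in>space (Om q). Rf \<omega> r m}) \<in> null_sets (Om q)"
    using null_Rf[OF _ N' c] by (intro null_sets_UN') auto
  thus ?thesis unfolding theta_eq by (simp add: measure_def null_sets_def)
qed

end


context gamp begin

lemma Rf_zero: "t \<in> T3 \<Longrightarrow> Rf \<omega> t 0"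
  unfolding Rf_def by auto

lemma Rf_rec':
  assumes t: "t \<in> T3" "t \<noteq> []"
  shows "Rf \<omega> t (Suc m) \<longleftrightarrow> (\<exists>c\<in>{0,1}. cross \<omega> (t @ [c]) \<and> Rf \<omega> (t @ [c]) m)"
proof
  assume "Rf \<omega> t (Suc m)"
  then obtain s where s: "length s = Suc m" "t @ s \<in> T3" "\<forall>k\<in>{1..Suc m}. cross \<omega> (t @ take k s)"
    unfolding Rf_def by blast
  then obtain c s' where cs: "s = c # s'" by (cases s) auto
  have "set s \<subseteq> {..<2}" using T3_app_nonnil[OF t] s(2) by simp
  hence c: "c \<in> {0,1}" using cs by auto
  have "cross \<omega> (t @ [c])" using s(3) cs by (metis One_nat_def atLeastAtMost_iff le_add1 le_numeral_extra(4) plus_1_eq_Suc take0 take_Suc_Cons)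
  moreover have "Rf \<omega> (t @ [c]) m" unfolding Rf_def
  proof (intro exI[of _ s'] conjI ballI)
    show "length s' = m" using s(1) cs by simp
    show "(t @ [c]) @ s' \<in> T3" using s(2) cs by simp
  next
    fix k assume k: "k \<in> {1..m}"
    have "(t @ [c]) @ take k s' = t @ take (Suc k) s" using cs by simp
    thus "cross \<omega> ((t @ [c]) @ take k s')" using s(3) k by auto
  qed
  ultimately show "\<exists>c\<in>{0,1}. cross \<omega> (t @ [c]) \<and> Rf \<omega> (t @ [c]) m" using c by blast
next
  assume "\<exists>c\<in>{0,1}. cross \<omega> (t @ [c]) \<and> Rf \<omega> (t @ [c]) m"
  then obtain c s' where c: "cross \<omega> (t @ [c])" "length s' = m" "(t @ [c]) @ s' \<in> T3"
    "\<forall>k\<in>{1..m}. cross \<omega> ((t @ [c]) @ take k s')" unfolding Rf_def by blast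
  show "Rf \<omega> t (Suc m)" unfolding Rf_def
  proof (intro exI[of _ "c # s'"] conjI ballI)
    show "length (c # s') = Suc m" using c by simp
    show "t @ c # s' \<in> T3" using c by simp
  next
    fix k assume k: "k \<in> {1..Suc m}"
    show "cross \<omega> (t @ take k (c # s'))"
    proof (cases k)
      case 0 thus ?thesis using k by simp
    next
      case (Suc k')
      show ?thesis
      proof (cases k')
        case 0 thus ?thesis using Suc c(1) by simp
      next
        case (Suc k'')
        have "t @ take k (c # s') = (t @ [c]) @ take k' s'" using \<open>k = Suc k'\<close> by simp
        moreover have "k' \<in> {1..m}" using k \<open>k = Suc k'\<close> Suc by auto
        ultimately show ?thesis using c(4) by simp
      qed
    qed
  qed
qed

lemma child_T3: "t \<in> T3 \<Longrightarrow> t \<noteq> [] \<Longrightarrow> c \<in> {0,1} \<Longrightarrow> t @ [c] \<in> T3"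
  using T3_app_nonnil[of t "[c]"] by auto

definition JJ :: "nat list \<Rightarrow> nat \<Rightarrow> (nat list \<times> 'e) set" where
  "JJ c m = Blk c \<union> Blks (Dn c m)"

lemma JJ_fin: "finite (JJ c m)" by (simp add: JJ_def Blk_fin Blks_fin Dn_fin)
lemma JJ_sub: "c \<in> T3 \<Longrightarrow> c \<noteq> [] \<Longrightarrow> JJ c m \<subseteq> Gamma_E E"
  unfolding JJ_def using Blk_sub Blks_sub[OF Dn_sub] by auto
lemma JJ_pref: "(w, e) \<in> JJ c m \<Longrightarrow> \<exists>s. w = c @ s"
  by (auto simp: JJ_def Blk_def Blks_def Dn_def)

lemma dep_Q: "dep (JJ c m) (\<lambda>\<omega>. cross \<omega> c \<and> Rf \<omega> c m)"
  unfolding JJ_def by (intro dep_conj dep_mono[OF dep_cross] dep_mono[OF dep_Rf]) auto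

lemma prob_child:
  assumes c: "c \<in> T3" "c \<noteq> []"
  shows "measure (Om q) {\<omega>\<in>space (Om q). cross \<omega> c \<and> Rf \<omega> c m} = hh (length c) q * measure (Om q) {\<omega>\<in>space (Om q). Rf \<omega> c m}"
proof -
  have disj: "Blk c \<inter> Blks (Dn c m) = {}" by (auto simp: Blk_def Blks_def Dn_def)
  show ?thesis
    using perc_indep_dep[OF Blk_fin Blks_fin[OF Dn_fin] Blk_sub[OF c] Blks_sub[OF Dn_sub] disj dep_cross dep_Rf]
    by (simp add: prob_cross[OF c])
qed

lemma prob_compl': "dep J Q \<Longrightarrow> finite J \<Longrightarrow> J \<subseteq> Gamma_E E \<Longrightarrow>
  measure (Om q) {\<omega>\<in>space (Om q). \<not> Q \<omega>} = 1 - measure (Om q) {\<omega>\<in>space (Om q). Q \<omega>}"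
proof -
  assume a: "dep J Q" "finite J" "J \<subseteq> Gamma_E E"
  interpret prob_space "Om q" by (rule ps)
  have "{\<omega>\<in>space (Om q). \<not> Q \<omega>} = space (Om q) - {\<omega>\<in>space (Om q). Q \<omega>}" by auto
  thus ?thesis using prob_compl[OF perc_meas_dep[OF a(2) a(3) a(1)]] by simp
qed

lemma prob_rec:
  assumes t: "t \<in> T3" "t \<noteq> []"
  shows "measure (Om q) {\<omega>\<in>space (Om q). Rf \<omega> t (Suc m)}
    = 1 - (1 - hh (Suc (length t)) q * measure (Om q) {\<omega>\<in>space (Om q). Rf \<omega> (t @ [0]) m})
        * (1 - hh (Suc (length t)) q * measure (Om q) {\<omega>\<in>space (Om q). Rf \<omega> (t @ [1]) m})"
proof -
  define Q where "Q = (\<lambda>c \<omega>. cross \<omega> (t @ [c]) \<and> Rf \<omega> (t @ [c]) m)"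
  have c01: "t @ [c] \<in> T3" "t @ [c] \<noteq> []" if "c \<in> {0,1}" for c using child_T3[OF t that] by auto
  have dQ: "dep (JJ (t @ [c]) m) (Q c)" for c unfolding Q_def by (rule dep_Q)
  have dnQ: "dep (JJ (t @ [c]) m) (\<lambda>\<omega>. \<not> Q c \<omega>)" for c by (rule dep_not[OF dQ])
  have sub: "JJ (t @ [c]) m \<subseteq> Gamma_E E" if "c \<in> {0,1}" for c using JJ_sub c01[OF that] by blast
  have disj: "JJ (t @ [0]) m \<inter> JJ (t @ [1]) m = {}"
  proof (rule ccontr)
    assume "JJ (t @ [0]) m \<inter> JJ (t @ [1]) m \<noteq> {}"
    then obtain w e where "(w, e) \<in> JJ (t @ [0]) m" "(w, e) \<in> JJ (t @ [1]) m" by auto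
    then obtain s s' where "w = (t @ [0]) @ s" "w = (t @ [1]) @ s'" using JJ_pref by metis
    thus False by simp
  qed
  have "{\<omega>\<in>space (Om q). Rf \<omega> t (Suc m)} = {\<omega>\<in>space (Om q). \<not> (\<not> Q 0 \<omega> \<and> \<not> Q 1 \<omega>)}"
    using Rf_rec'[OF t] unfolding Q_def by auto
  hence e1: "measure (Om q) {\<omega>\<in>space (Om q). Rf \<omega> t (Suc m)} = 1 - measure (Om q) {\<omega>\<in>space (Om q). \<not> Q 0 \<omega> \<and> \<not> Q 1 \<omega>}"
    using prob_compl'[OF dep_mono[OF dep_conj[OF dep_mono[OF dnQ[of 0]] dep_mono[OF dnQ[of 1]]]],
       of "JJ (t @ [0]) m \<union> JJ (t @ [1]) m" "JJ (t @ [0]) m \<union> JJ (t @ [1]) m"] sub JJ_fin by auto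
  have e2: "measure (Om q) {\<omega>\<in>space (Om q). \<not> Q 0 \<omega> \<and> \<not> Q 1 \<omega>}
      = measure (Om q) {\<omega>\<in>space (Om q). \<not> Q 0 \<omega>} * measure (Om q) {\<omega>\<in>space (Om q). \<not> Q 1 \<omega>}"
    by (rule perc_indep_dep[OF JJ_fin JJ_fin sub sub disj dnQ dnQ]) auto
  have nQ: "measure (Om q) {\<omega>\<in>space (Om q). \<not> Q c \<omega>} = 1 - hh (Suc (length t)) q * measure (Om q) {\<omega>\<in>space (Om q). Rf \<omega> (t @ [c]) m}"
    if "c \<in> {0,1}" for c
    using prob_compl'[OF dQ JJ_fin sub[OF that]] prob_child[OF c01[OF that]] unfolding Q_def by simp
  have n0: "measure (Om q) {\<omega>\<in>space (Om q). \<not> Q 0 \<omega>} = 1 - hh (Suc (length t)) q * measure (Om q) {\<omega>\<in>space (Om q). Rf \<omega> (t @ [0]) m}"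
    by (rule nQ) simp
  have n1: "measure (Om q) {\<omega>\<in>space (Om q). \<not> Q 1 \<omega>} = 1 - hh (Suc (length t)) q * measure (Om q) {\<omega>\<in>space (Om q). Rf \<omega> (t @ [1]) m}"
    by (rule nQ) simp
  show ?thesis unfolding e1 e2 n0 n1 ..
qed

lemma lowerB:
  assumes h0: "1/2 < h0" "h0 \<le> 1" and N: "\<forall>k>N. h0 \<le> hh k q"
  shows "t \<in> T3 \<Longrightarrow> t \<noteq> [] \<Longrightarrow> N \<le> length t \<Longrightarrow> (2*h0-1)/h0^2 \<le> measure (Om q) {\<omega>\<in>space (Om q). Rf \<omega> t m}"
proof (induction m arbitrary: t)
  case 0
  interpret prob_space "Om q" by (rule ps)
  have "{\<omega>\<in>space (Om q). Rf \<omega> t 0} = space (Om q)" using Rf_zero[OF 0(1)] by auto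
  moreover have "(2*h0-1)/h0^2 \<le> 1"
  proof -
    have "0 \<le> (h0 - 1)^2" by simp
    hence "2*h0-1 \<le> h0^2" by (simp add: power2_eq_square algebra_simps)
    thus ?thesis using h0 by (simp add: divide_le_eq)
  qed
  ultimately show ?case by (simp add: prob_space)
next
  case (Suc m)
  interpret prob_space "Om q" by (rule ps)
  have c01: "t @ [c] \<in> T3" "t @ [c] \<noteq> []" "N \<le> length (t @ [c])" if "c \<in> {0,1}" for c
    using child_T3[OF Suc.prems(1,2) that] Suc.prems(3) by auto
  have IH: "(2*h0-1)/h0^2 \<le> measure (Om q) {\<omega>\<in>space (Om q). Rf \<omega> (t @ [c]) m}" if "c \<in> {0,1}" for c
    using Suc.IH c01[OF that] by blast
  show ?case unfolding prob_rec[OF Suc.prems(1,2)]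
    by (rule arith1[OF h0]) (use N Suc.prems(3) IH[of 0] IH[of 1] hh_le1 in auto)
qed

lemma thetaB:
  assumes h0: "1/2 < h0" "h0 \<le> 1" and N: "\<forall>k>N. h0 \<le> hh k q"
  shows "0 < theta_inf (Gamma_V V a b) (Gamma_E E) (Gamma_ends ends a b) q"
proof -
  interpret prob_space "Om q" by (rule ps)
  define r where "r = replicate (Suc N) (0::nat)"
  have r: "r \<in> T3" "r \<noteq> []" "N \<le> length r" unfolding r_def by (auto simp: T3_Cons)
  define A where "A = (\<lambda>m. {\<omega>\<in>space (Om q). Rf \<omega> r m})"
  have dec: "decseq A" unfolding A_def by (intro decseq_SucI) (auto intro: Rf_mono)
  have "(\<lambda>m. measure (Om q) (A m)) \<longlonglongrightarrow> measure (Om q) (\<Inter>m. A m)"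
    using meas_Rf dec unfolding A_def by (intro finite_Lim_measure_decseq) auto
  hence "(2*h0-1)/h0^2 \<le> measure (Om q) (\<Inter>m. A m)"
    using lowerB[OF h0 N r] unfolding A_def by (intro LIMSEQ_le_const) auto
  moreover have "0 < (2*h0-1)/h0^2" using h0 by simp
  moreover have "measure (Om q) (\<Inter>m. A m) \<le> measure (Om q) (\<Union>r\<in>T3. \<Inter>m. {\<omega>\<in>space (Om q). Rf \<omega> r m})"
    using theta_sets r(1) unfolding A_def by (intro finite_measure_mono) auto
  ultimately show ?thesis unfolding theta_eq by linarith
qed

lemma hh_mono:
  assumes "0 \<le> p" "p \<le> q" "q \<le> 1"
  shows "hh n p \<le> hh n q"
proof -
  have "upset {\<tau>. conn (ends n) {e\<in>E n. \<tau> e} (a n) (b n)}"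
    unfolding upset_def by (auto elim!: conn_mono[rotated])
  thus ?thesis unfolding hh_def h_conn_def using assms finE by (intro upset_mono_prob) auto
qed

lemma hh_zero: "hh n 0 = 0"
proof -
  have b: "bernoulli_pmf 0 = return_pmf False"
    by (rule pmf_eqI) (auto simp: indicator_def)
  have "\<not> conn (ends n) {} (a n) (b n)" using conn_empty ab by metis
  thus ?thesis unfolding hh_def h_conn_def b using finE by (simp add: indicator_def)
qed

end


theorem lemma1:
  fixes V :: "nat \<Rightarrow> 'v set" and E :: "nat \<Rightarrow> 'e set"
    and ends :: "nat \<Rightarrow> 'e \<Rightarrow> 'v \<times> 'v" and a b :: "nat \<Rightarrow> 'v" and p :: real
  assumes finV: "\<And>n. finite (V n)" and finE: "\<And>n. finite (E n)"
    and ends_in: "\<And>n e. e \<in> E n \<Longrightarrow> fst (ends n e) \<in> V n \<and> snd (ends n e) \<in> V n"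
    and a_in: "\<And>n. a n \<in> V n" and b_in: "\<And>n. b n \<in> V n" and ab: "\<And>n. a n \<noteq> b n"
    and connected: "\<And>n x y. x \<in> V n \<Longrightarrow> y \<in> V n \<Longrightarrow> conn (ends n) (E n) x y"
    and p: "p \<in> {0..1}"
  shows "(limsup (\<lambda>n. ereal (h_conn (E n) (ends n) (a n) (b n) p)) < ereal (1/2)
            \<longrightarrow> p \<le> p_crit (Gamma_V V a b) (Gamma_E E) (Gamma_ends ends a b))
       \<and> (liminf (\<lambda>n. ereal (h_conn (E n) (ends n) (a n) (b n) p)) > ereal (1/2)
            \<longrightarrow> p \<ge> p_crit (Gamma_V V a b) (Gamma_E E) (Gamma_ends ends a b))"
proof -
  interpret gamp V E ends a b
    by unfold_locales (use ends_in ab finV finE in auto)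
  let ?Th = "theta_inf (Gamma_V V a b) (Gamma_E E) (Gamma_ends ends a b)"
  define Z where "Z = {q \<in> {0..1}. ?Th q = 0}"
  have pc: "p_crit (Gamma_V V a b) (Gamma_E E) (Gamma_ends ends a b) = Sup Z"
    by (simp add: p_crit_def Z_def)
  have bdd: "bdd_above Z" unfolding Z_def bdd_above_def by (intro exI[of _ 1]) auto
  have hc: "h_conn (E n) (ends n) (a n) (b n) q = hh n q" for n q by (simp add: hh_def)
  have "limsup (\<lambda>n. ereal (hh n 0)) = 0" by (simp add: hh_zero Limsup_const)
  hence "?Th 0 = 0" by (intro thetaA) simp
  hence Z0: "0 \<in> Z" by (simp add: Z_def)
  show ?thesis unfolding hc pc
  proof (intro conjI impI)
    assume "limsup (\<lambda>n. ereal (hh n p)) < ereal (1/2)"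
    hence "?Th p = 0" by (rule thetaA)
    hence "p \<in> Z" using p by (simp add: Z_def)
    thus "p \<le> Sup Z" using bdd by (rule cSup_upper)
  next
    assume li: "ereal (1/2) < liminf (\<lambda>n. ereal (hh n p))"
    obtain d where d: "ereal (1/2) < ereal d" "ereal d < liminf (\<lambda>n. ereal (hh n p))"
      using ereal_dense2[OF li] by blast
    have "eventually (\<lambda>n. ereal d < ereal (hh n p)) sequentially" by (rule less_LiminfD[OF d(2)])
    then obtain N where N: "\<forall>n\<ge>N. d < hh n p" by (auto simp: eventually_sequentially)
    have d1: "1/2 < d" using d(1) by simp
    have d2: "d \<le> 1"
    proof -
      have "d < hh N p" using N by simp
      thus ?thesis using hh_le1[of N p] by linarith
    qed
    show "Sup Z \<le> p"
    proof (rule cSup_least)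
      show "Z \<noteq> {}" using Z0 by auto
    next
      fix q assume q: "q \<in> Z"
      show "q \<le> p"
      proof (rule ccontr)
        assume "\<not> q \<le> p"
        hence qp: "p \<le> q" "q \<le> 1" using q by (auto simp: Z_def)
        have "\<forall>k>N. d \<le> hh k q"
        proof (intro allI impI)
          fix k assume "N < k"
          hence "d < hh k p" using N by auto
          also have "\<dots> \<le> hh k q" using hh_mono[of p q k] p qp by auto
          finally show "d \<le> hh k q" by simp
        qed
        hence "0 < ?Th q" by (rule thetaB[OF d1 d2])
        thus False using q by (simp add: Z_def)
      qed
    qed
  qed
qed


end
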